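(* Let $k\geq 1$ and $n\geq 2$ be integers, let $\Omega>0$ and $0<\sigma\leq m_{\min}$. Then there exist a positive discrete measure $\mu=\sum_{j=1}^{n}a_j\delta_{\mathbf y_j}$ on $\mathbb R^k$ with $n$ distinct supports $\mathbf y_j\in\mathbb R^k$ and amplitudes $a_j>0$, and a positive discrete measure $\hat \mu=\sum_{j=1}^{n-1}\hat a_j \delta_{\hat{\mathbf y}_j}$ on $\mathbb R^k$ with $n-1$ supports and amplitudes $\hat a_j>0$, such that \[ \max_{\boldsymbol\omega\in\mathbb R^k,\ \|\boldsymbol\omega\|_2\leq\Omega}\big|\mathcal F[\hat \mu](\boldsymbol\omega)-\mathcal F [\mu](\boldsymbol\omega)\big|< \sigma, \] and moreover \[ \min_{1\leq j\leq n}|a_j|= m_{\min}, \qquad \min_{p\neq j}\|\mathbf y_p-\mathbf y_j\|_2= \frac{2e^{-1}}{\Omega}\Big(\frac{\sigma}{m_{\min}}\Big)^{\frac{1}{2n-2}}. \]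
   Context: For a discrete measure $\nu=\sum_{j} c_j\delta_{\mathbf x_j}$ on $\mathbb R^k$, its Fourier transform is $\mathcal F[\nu](\boldsymbol\omega)=\sum_j c_j e^{i \mathbf x_j\cdot\boldsymbol\omega}$, $\boldsymbol\omega\in\mathbb R^k$. Here $\Omega>0$ is the cutoff frequency, $\sigma>0$ the noise level and $m_{\min}>0$ a prescribed minimal amplitude. *)

theory Defs
  imports "HOL-Analysis.Analysis"
begin

definition fourier_discrete :: "nat set \<Rightarrow> (nat \<Rightarrow> real) \<Rightarrow> (nat \<Rightarrow> real^'k) \<Rightarrow> real^'k \<Rightarrow> complex" where
  "fourier_discrete J c x \<omega> = (\<Sum>j\<in>J. complex_of_real (c j) * exp (\<i> * complex_of_real (x j \<bullet> \<omega>)))"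

end

theory Submission
  imports Defs "HOL-Analysis.Analysis"
begin
lemma cis_bound: "cmod (1 - exp (\<i> * complex_of_real t)) \<le> \<bar>t\<bar>"
proof -
  have "1 - exp (\<i> * complex_of_real t) = exp (\<i> * complex_of_real (t/2)) * (exp (- \<i> * complex_of_real (t/2)) - exp (\<i> * complex_of_real (t/2)))"
    by (simp add: algebra_simps flip: exp_add)
  also have "exp (- \<i> * complex_of_real (t/2)) - exp (\<i> * complex_of_real (t/2)) = - 2 * \<i> * complex_of_real (sin (t/2))"
  proof -
    have "exp (- \<i> * complex_of_real (t/2)) = cis (-(t/2))" by (simp add: cis_conv_exp)
    moreover have "exp (\<i> * complex_of_real (t/2)) = cis (t/2)" by (simp add: cis_conv_exp)
    ultimately show ?thesis by (simp add: complex_eq_iff)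
  qed
  finally have "cmod (1 - exp (\<i> * complex_of_real t)) = 2 * \<bar>sin (t/2)\<bar>"
    by (simp add: norm_mult)
  also have "\<dots> \<le> 2 * \<bar>t/2\<bar>" using abs_sin_x_le_abs_x[of "t/2"] by (simp)
  finally show ?thesis by simp
qed
lemma split_sum: "(\<Sum>l\<le>2*M. f l) = (\<Sum>j\<le>M. f (2*j)) + (\<Sum>j<M. f (2*j+1))" for f :: "nat \<Rightarrow> 'a::comm_monoid_add"
proof (induction M)
  case 0 then show ?case by simp
next
  case (Suc M)
  have "{..2*Suc M} = insert (Suc (Suc (2*M))) (insert (Suc (2*M)) {..2*M})" by auto
  then have "(\<Sum>l\<le>2*Suc M. f l) = f (Suc (Suc (2*M))) + f (Suc (2*M)) + (\<Sum>l\<le>2*M. f l)"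
    by (simp add: add.assoc)
  then show ?case using Suc by (simp add: algebra_simps)
qed

lemma exp_mult_nat: "exp (\<i> * complex_of_real (real l * t)) = exp (\<i> * complex_of_real t) ^ l"
  by (simp add: exp_of_nat_mult[symmetric] algebra_simps)

lemma key_identity:
  fixes m h :: real and e \<omega> :: "real^'k" and M :: nat
  defines "a \<equiv> \<lambda>j. m * real ((2*M) choose (2*j))"
    and "ah \<equiv> \<lambda>j. m * real ((2*M) choose (2*j+1))"
    and "y \<equiv> \<lambda>j. (2 * real j * h) *\<^sub>R e"
    and "yh \<equiv> \<lambda>j. ((2 * real j + 1) * h) *\<^sub>R e"
  shows "fourier_discrete {..<M} ah yh \<omega> - fourier_discrete {..<Suc M} a y \<omega>
     = - complex_of_real m * (1 - exp (\<i> * complex_of_real (h * (e \<bullet> \<omega>)))) ^ (2*M)"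
proof -
  define z where "z = exp (\<i> * complex_of_real (h * (e \<bullet> \<omega>)))"
  define g where "g = (\<lambda>l. of_nat ((2*M) choose l) * (-z)^l :: complex)"
  have "(1 - z) ^ (2*M) = (-z + 1) ^ (2*M)" by simp
  also have "\<dots> = (\<Sum>l\<le>2*M. g l)" unfolding g_def binomial_ring by simp
  also have "\<dots> = (\<Sum>j\<le>M. g (2*j)) + (\<Sum>j<M. g (2*j+1))" by (rule split_sum)
  finally have bin: "(1 - z) ^ (2*M) = (\<Sum>j\<le>M. g (2*j)) + (\<Sum>j<M. g (2*j+1))" .
  have A: "fourier_discrete {..<Suc M} a y \<omega> = complex_of_real m * (\<Sum>j\<le>M. g (2*j))"
    unfolding fourier_discrete_def lessThan_Suc_atMost sum_distrib_left
  proof (rule sum.cong[OF refl])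
    fix j assume "j \<in> {..M}"
    have "y j \<bullet> \<omega> = real (2*j) * (h * (e \<bullet> \<omega>))" by (simp add: y_def)
    then have "exp (\<i> * complex_of_real (y j \<bullet> \<omega>)) = z ^ (2*j)"
      by (simp only: z_def exp_mult_nat)
    then show "complex_of_real (a j) * exp (\<i> * complex_of_real (y j \<bullet> \<omega>)) = complex_of_real m * g (2*j)"
      by (simp add: a_def g_def power_mult_distrib)
  qed
  have B: "fourier_discrete {..<M} ah yh \<omega> = - (complex_of_real m * (\<Sum>j<M. g (2*j+1)))"
    unfolding fourier_discrete_def sum_distrib_left sum_negf[symmetric]
  proof (rule sum.cong[OF refl])
    fix j assume "j \<in> {..<M}"
    have "yh j \<bullet> \<omega> = real (2*j+1) * (h * (e \<bullet> \<omega>))" by (simp add: yh_def)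
    then have "exp (\<i> * complex_of_real (yh j \<bullet> \<omega>)) = z ^ (2*j+1)"
      by (simp only: z_def exp_mult_nat)
    then show "complex_of_real (ah j) * exp (\<i> * complex_of_real (yh j \<bullet> \<omega>)) = - (complex_of_real m * g (2*j+1))"
      by (simp add: ah_def g_def power_mult_distrib)
  qed
  show ?thesis unfolding A B z_def[symmetric] bin by (simp add: algebra_simps)
qed

theorem theorem3p2:
  fixes n :: nat and \<Omega> \<sigma> m_min :: real
  assumes "n \<ge> 2" and "\<Omega> > 0" and "0 < \<sigma>" and "\<sigma> \<le> m_min"
  shows "\<exists>(a :: nat \<Rightarrow> real) (y :: nat \<Rightarrow> real^'k) (ah :: nat \<Rightarrow> real) (yh :: nat \<Rightarrow> real^'k).
           inj_on y {..<n} \<and> (\<forall>j<n. a j > 0) \<and> (\<forall>j<n - 1. ah j > 0) \<and>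
           ((SUP \<omega>\<in>cball 0 \<Omega>. cmod (fourier_discrete {..<n - 1} ah yh \<omega> - fourier_discrete {..<n} a y \<omega>)) < \<sigma>) \<and>
           Min ((\<lambda>j. \<bar>a j\<bar>) ` {..<n}) = m_min \<and>
           Min ((\<lambda>(p, j). dist (y p) (y j)) ` {(p, j). p < n \<and> j < n \<and> p \<noteq> j})
             = 2 * exp (-1) / \<Omega> * (\<sigma> / m_min) powr (1 / (2 * real n - 2))"
proof -
  define M where "M = n - 1"
  define m where "m = m_min"
  have nM: "n = Suc M" and M1: "M \<ge> 1" using assms(1) by (auto simp: M_def)
  have mpos: "m > 0" using assms by (simp add: m_def)
  define h where "h = exp (-1) / \<Omega> * (\<sigma> / m) powr (1 / real (2*M))"
  have hpos: "h > 0" using assms mpos by (simp add: h_def)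
  obtain i :: 'k where True by blast
  define e :: "real^'k" where "e = axis i 1"
  have ne: "norm e = 1" by (simp add: e_def)
  define a where "a \<equiv> \<lambda>j. m * real ((2*M) choose (2*j))"
  define ah where "ah \<equiv> \<lambda>j. m * real ((2*M) choose (2*j+1))"
  define y where "y \<equiv> \<lambda>j. (2 * real j * h) *\<^sub>R e"
  define yh where "yh \<equiv> \<lambda>j. ((2 * real j + 1) * h) *\<^sub>R e"
  have inj: "inj_on y {..<n}"
    by (rule inj_onI) (use hpos ne in \<open>auto simp: y_def\<close>)
  have apos: "\<forall>j<n. a j > 0" using mpos nM by (auto simp: a_def)
  have ahpos: "\<forall>j<n - 1. ah j > 0" using mpos nM by (auto simp: ah_def)
  have hN: "(h * \<Omega>) ^ (2*M) = exp (- real (2*M)) * (\<sigma> / m)"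
  proof -
    have "h * \<Omega> = exp (-1) * (\<sigma> / m) powr (1 / real (2*M))" using assms by (simp add: h_def)
    then have "(h * \<Omega>) ^ (2*M) = exp (-1) ^ (2*M) * ((\<sigma> / m) powr (1 / real (2*M))) ^ (2*M)"
      by (simp add: power_mult_distrib)
    also have "((\<sigma> / m) powr (1 / real (2*M))) ^ (2*M) = \<sigma> / m"
      using assms mpos M1 by (simp add: powr_realpow[symmetric] powr_powr)
    also have "exp (-1) ^ (2*M) = exp (- real (2*M))"
      by (simp add: exp_of_nat_mult[symmetric])
    finally show ?thesis .
  qed
  have bound: "cmod (fourier_discrete {..<n - 1} ah yh \<omega> - fourier_discrete {..<n} a y \<omega>)
      \<le> exp (- real (2*M)) * \<sigma>" if "\<omega> \<in> cball 0 \<Omega>" for \<omega>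
  proof -
    have "cmod (fourier_discrete {..<n - 1} ah yh \<omega> - fourier_discrete {..<n} a y \<omega>)
        = m * cmod (1 - exp (\<i> * complex_of_real (h * (e \<bullet> \<omega>)))) ^ (2*M)"
      unfolding nM diff_Suc_1 a_def ah_def y_def yh_def key_identity
      using mpos by (simp add: norm_mult norm_power)
    also have "\<dots> \<le> m * \<bar>h * (e \<bullet> \<omega>)\<bar> ^ (2*M)"
      using mpos by (intro mult_left_mono power_mono cis_bound) auto
    also have "\<bar>h * (e \<bullet> \<omega>)\<bar> \<le> h * \<Omega>"
    proof -
      have "\<bar>e \<bullet> \<omega>\<bar> \<le> norm e * norm \<omega>" by (rule Cauchy_Schwarz_ineq2)
      also have "\<dots> \<le> \<Omega>" using that ne by simp
      finally show ?thesis using hpos by (simp add: abs_mult)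
    qed
    then have "m * \<bar>h * (e \<bullet> \<omega>)\<bar> ^ (2*M) \<le> m * (h * \<Omega>) ^ (2*M)"
      using mpos by (intro mult_left_mono power_mono) auto
    also have "\<dots> = exp (- real (2*M)) * \<sigma>" using hN mpos by simp
    finally show ?thesis .
  qed
  have sup: "(SUP \<omega>\<in>cball 0 \<Omega>. cmod (fourier_discrete {..<n - 1} ah yh \<omega> - fourier_discrete {..<n} a y \<omega>)) < \<sigma>"
  proof -
    have "(SUP \<omega>\<in>cball 0 \<Omega>. cmod (fourier_discrete {..<n - 1} ah yh \<omega> - fourier_discrete {..<n} a y \<omega>))
       \<le> exp (- real (2*M)) * \<sigma>"
      using assms(2) bound by (intro cSUP_least) auto
    also have "\<dots> < \<sigma>" using assms(3) M1 by simp
    finally show ?thesis .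
  qed
  have mina: "Min ((\<lambda>j. \<bar>a j\<bar>) ` {..<n}) = m_min"
  proof (rule Min_eqI)
    show "finite ((\<lambda>j. \<bar>a j\<bar>) ` {..<n})" by simp
    show "m_min \<in> (\<lambda>j. \<bar>a j\<bar>) ` {..<n}"
      using nM mpos by (auto simp: a_def m_def image_iff intro!: bexI[of _ 0])
    fix x assume "x \<in> (\<lambda>j. \<bar>a j\<bar>) ` {..<n}"
    then obtain j where j: "j < n" "x = \<bar>a j\<bar>" by auto
    have "(2*M choose (2*j)) \<ge> 1" using j nM by (simp add: Suc_le_eq zero_less_binomial)
    then show "m_min \<le> x" using j mpos by (simp add: a_def m_def)
  qed
  have dist_eq: "dist (y p) (y j) = 2 * h * \<bar>real p - real j\<bar>" for p j
  proof -
    have "y p - y j = (2 * h * (real p - real j)) *\<^sub>R e" by (simp add: y_def algebra_simps)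
    then show ?thesis using hpos ne by (simp add: dist_norm abs_mult)
  qed
  have mind: "Min ((\<lambda>(p, j). dist (y p) (y j)) ` {(p, j). p < n \<and> j < n \<and> p \<noteq> j}) = 2 * h"
  proof (rule Min_eqI)
    have "{(p, j). p < n \<and> j < n \<and> p \<noteq> j} \<subseteq> {..<n} \<times> {..<n}" by auto
    then show "finite ((\<lambda>(p, j). dist (y p) (y j)) ` {(p, j). p < n \<and> j < n \<and> p \<noteq> j})"
      by (meson finite_SigmaI finite_imageI finite_lessThan finite_subset)
    have "(0, 1) \<in> {(p, j). p < n \<and> j < n \<and> p \<noteq> j}" using nM M1 by auto
    moreover have "dist (y 0) (y 1) = 2 * h" by (simp add: dist_eq)
    ultimately show "2 * h \<in> (\<lambda>(p, j). dist (y p) (y j)) ` {(p, j). p < n \<and> j < n \<and> p \<noteq> j}"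
      by (intro image_eqI[where x="(0,1)"]) simp_all
    fix x assume "x \<in> (\<lambda>(p, j). dist (y p) (y j)) ` {(p, j). p < n \<and> j < n \<and> p \<noteq> j}"
    then obtain p j where pj: "p \<noteq> j" "x = dist (y p) (y j)" by auto
    have "\<bar>real p - real j\<bar> \<ge> 1" using pj(1) by (cases "p < j") auto
    then show "2 * h \<le> x" using pj hpos dist_eq by (simp add: mult_le_cancel_left1)
  qed
  have eq: "2 * h = 2 * exp (-1) / \<Omega> * (\<sigma> / m_min) powr (1 / (2 * real n - 2))"
    by (simp add: h_def m_def nM)
  show ?thesis
    apply (rule exI[of _ a], rule exI[of _ y], rule exI[of _ ah], rule exI[of _ yh])
    apply (intro conjI)
         apply (rule inj)
        apply (rule apos)
       apply (rule ahpos)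
      apply (rule sup)
     apply (rule mina)
    apply (subst mind)
    apply (rule eq)
    done
qed

end
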